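(* There is an absolute constant $C>0$ such that for all integers $d,h\ge 1$ the following holds: the class of graphs admitting a signed tree model of width at most $d$ whose tree has depth at most $h$ admits an adjacency labeling scheme in which every $n$-vertex graph ($n\ge 2$) receives labels of at most $C\,d\,h\log n$ bits; i.e., every $n$-vertex graph with a signed tree model of width $d$ and depth $h$ admits $O(dh\log n)$-bit adjacency labels decodable by a common decoder.
   Context: Tree notation: for a rooted tree $T$, $u\prec_T u'$ means $u$ is a strict ancestor of $u'$, $u\preceq_T u'$ means $u=u'$ or $u\prec_T u'$; for unordered pairs, $uv\preceq_T u'v'$ means ($u\preceq_T u'$ and $v\preceq_T v'$) or ($v\preceq_T u'$ and $u\preceq_T v'$), and $uv\prec_T u'v'$ means $uv\preceq_T u'v'$ and $\{u,v\}\ne\{u',v'\}$. A full rooted binary tree has every non-leaf node with exactly two children; its depth is the maximum number of nodes on a root-to-leaf path. A transversal pair of $T$ is a pair of distinct nodes neither an ancestor of the other; two transversal pairs cross if their endpoints can be named $\{a,b\},\{a',b'\}$ with $a\prec_T a'$ and $b'\prec_T b$. A signed tree model is $(T,A(T),B(T))$ with $T$ a full rooted binary tree and $A(T),B(T)$ disjoint sets of transversal pairs, no two pairs of $A(T)\cup B(T)$ crossing. It defines the graph on the leaf set $L(T)$ where distinct leaves $u,v$ are adjacent iff some $u'v'\in B(T)$ has $u'v'\preceq_T uv$ and no $u''v''\in A(T)$ has $u'v'\prec_T u''v''\preceq_T uv$. Its width is the degeneracy of the graph $(V(T),A(T)\cup B(T))$. An adjacency labeling scheme with $f(n)$-bit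 labels for a class $\mathcal C$: a decoder $D$ on pairs of binary strings such that every $n$-vertex $G\in\mathcal C$ has a labeling $\ell$ of its vertices with strings of length $\le f(n)$ satisfying $D(\ell(u),\ell(v))=1$ iff $uv\in E(G)$ for distinct $u,v$. *)

theory Defs
  imports Complex_Main
begin

text \<open>A node of a rooted binary tree is addressed by the path from the root
  (a list of booleans: False = left child, True = right child).\<close>

type_synonym node = "bool list"

definition anc_eq :: "node \<Rightarrow> node \<Rightarrow> bool" where
  "anc_eq u v \<longleftrightarrow> (\<exists>w. v = u @ w)"

definition anc :: "node \<Rightarrow> node \<Rightarrow> bool" where
  "anc u v \<longleftrightarrow> anc_eq u v \<and> u \<noteq> v"

definition full_binary_tree :: "node set \<Rightarrow> bool" where
  "full_binary_tree T \<longleftrightarrow> finite T \<and> [] \<in> T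
     \<and> (\<forall>v\<in>T. \<forall>u. anc_eq u v \<longrightarrow> u \<in> T)
     \<and> (\<forall>v\<in>T. (v @ [False] \<in> T) \<longleftrightarrow> (v @ [True] \<in> T))"

definition leaves :: "node set \<Rightarrow> node set" where
  "leaves T = {v \<in> T. v @ [False] \<notin> T \<and> v @ [True] \<notin> T}"

text \<open>Depth = maximum number of nodes on a root-to-leaf path (= length + 1).\<close>
definition depth_at_most :: "node set \<Rightarrow> nat \<Rightarrow> bool" where
  "depth_at_most T h \<longleftrightarrow> (\<forall>v\<in>T. length v + 1 \<le> h)"

definition transversal_pair :: "node set \<Rightarrow> node set \<Rightarrow> bool" where
  "transversal_pair T p \<longleftrightarrow> (\<exists>u v. p = {u, v} \<and> u \<in> T \<and> v \<in> T \<and> u \<noteq> v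
      \<and> \<not> anc_eq u v \<and> \<not> anc_eq v u)"

definition pair_le :: "node set \<Rightarrow> node set \<Rightarrow> bool" where
  "pair_le p q \<longleftrightarrow> (\<exists>u v u' v'. p = {u, v} \<and> q = {u', v'} \<and> anc_eq u u' \<and> anc_eq v v')"

definition pair_less :: "node set \<Rightarrow> node set \<Rightarrow> bool" where
  "pair_less p q \<longleftrightarrow> pair_le p q \<and> p \<noteq> q"

definition pairs_cross :: "node set \<Rightarrow> node set \<Rightarrow> bool" where
  "pairs_cross p q \<longleftrightarrow> (\<exists>a b a' b'. p = {a, b} \<and> q = {a', b'} \<and> anc a a' \<and> anc b' b)"

definition signed_tree_model :: "node set \<Rightarrow> node set set \<Rightarrow> node set set \<Rightarrow> bool" where
  "signed_tree_model T A B \<longleftrightarrow> full_binary_tree T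
     \<and> (\<forall>p\<in>A. transversal_pair T p) \<and> (\<forall>p\<in>B. transversal_pair T p)
     \<and> A \<inter> B = {}
     \<and> (\<forall>p\<in>A \<union> B. \<forall>q\<in>A \<union> B. \<not> pairs_cross p q)"

definition model_adj :: "node set set \<Rightarrow> node set set \<Rightarrow> node \<Rightarrow> node \<Rightarrow> bool" where
  "model_adj A B u v \<longleftrightarrow> (\<exists>p\<in>B. pair_le p {u, v}
      \<and> \<not> (\<exists>q\<in>A. pair_less p q \<and> pair_le q {u, v}))"

definition width_at_most :: "node set \<Rightarrow> node set set \<Rightarrow> node set set \<Rightarrow> nat \<Rightarrow> bool" where
  "width_at_most T A B d \<longleftrightarrow> (\<forall>S \<subseteq> T. S \<noteq> {} \<longrightarrow>
      (\<exists>v\<in>S. card {w \<in> S. {v, w} \<in> A \<union> B} \<le> d))"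

text \<open>Finite graphs: a finite vertex set V of naturals and an adjacency predicate E
  (only its values on distinct vertices of V matter).\<close>

definition has_signed_tree_model :: "nat \<Rightarrow> nat \<Rightarrow> nat set \<Rightarrow> (nat \<Rightarrow> nat \<Rightarrow> bool) \<Rightarrow> bool" where
  "has_signed_tree_model d h V E \<longleftrightarrow> (\<exists>T A B \<phi>. signed_tree_model T A B
      \<and> width_at_most T A B d \<and> depth_at_most T h
      \<and> bij_betw \<phi> V (leaves T)
      \<and> (\<forall>u\<in>V. \<forall>v\<in>V. u \<noteq> v \<longrightarrow> (E u v \<longleftrightarrow> model_adj A B (\<phi> u) (\<phi> v))))"

definition labeling_scheme ::
  "(nat set \<Rightarrow> (nat \<Rightarrow> nat \<Rightarrow> bool) \<Rightarrow> bool) \<Rightarrow> (nat \<Rightarrow> real) \<Rightarrow> bool" where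
  "labeling_scheme cls f \<longleftrightarrow> (\<exists>D :: bool list \<Rightarrow> bool list \<Rightarrow> bool.
      \<forall>V E. finite V \<longrightarrow> card V \<ge> 2 \<longrightarrow> cls V E \<longrightarrow>
        (\<exists>lab :: nat \<Rightarrow> bool list.
           (\<forall>v\<in>V. real (length (lab v)) \<le> f (card V))
         \<and> (\<forall>u\<in>V. \<forall>v\<in>V. u \<noteq> v \<longrightarrow> (D (lab u) (lab v) \<longleftrightarrow> E u v))))"

end

theory Submission
  imports Defs
begin


fun code :: "nat \<Rightarrow> bool list" where
  "code x = (if x = 0 then [False] else True # odd x # code (x div 2))"

declare code.simps[simp del]
lemma code_0[simp]: "code 0 = [False]" by (simp add: code.simps)

lemma code_app_inj: "code x @ r = code y @ s \<Longrightarrow> x = y \<and> r = s"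
proof (induction x arbitrary: y r s rule: code.induct)
  case (1 x)
  show ?case
  proof (cases "x = 0")
    case True
    then show ?thesis using 1(2) by (cases "y = 0") (auto simp: code.simps[of x] code.simps[of y])
  next
    case False
    then have y0: "y \<noteq> 0" using 1(2) by (cases "y = 0") (auto simp: code.simps[of x] code.simps[of y])
    then have "odd x = odd y" and h: "code (x div 2) @ r = code (y div 2) @ s"
      using 1(2) False by (auto simp: code.simps[of x] code.simps[of y])
    from 1(1)[OF False h] have "x div 2 = y div 2" "r = s" by auto
    with \<open>odd x = odd y\<close> have "x = y" by (metis div_mult_mod_eq odd_iff_mod_2_eq_one even_iff_mod_2_eq_zero)
    then show ?thesis using \<open>r = s\<close> by simp
  qed
qed

lemma code_len: "x < 2 ^ k \<Longrightarrow> length (code x) \<le> 2 * k + 1"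
proof (induction k arbitrary: x)
  case 0 then show ?case by (simp add: code.simps)
next
  case (Suc k)
  show ?case
  proof (cases "x = 0")
    case True then show ?thesis by (simp add: code.simps)
  next
    case False
    have "x div 2 < 2 ^ k" using Suc.prems by auto
    from Suc.IH[OF this] False show ?thesis by (simp add: code.simps[of x])
  qed
qed

type_synonym lab = "((nat \<times> nat) \<times> ((nat \<times> nat) \<times> bool) list) list"

fun encE :: "(nat \<times> nat) \<times> bool \<Rightarrow> bool list" where
  "encE ((a, b), s) = code a @ code b @ [s]"

fun encOuts :: "((nat \<times> nat) \<times> bool) list \<Rightarrow> bool list" where
  "encOuts [] = [False]"
| "encOuts (e # es) = True # encE e @ encOuts es"

fun encL :: "lab \<Rightarrow> bool list" where
  "encL [] = [False]"
| "encL (((a, b), es) # r) = True # code a @ code b @ encOuts es @ encL r"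

lemma encE_app_inj: "encE x @ r = encE y @ s \<Longrightarrow> x = y \<and> r = s"
proof -
  assume h: "encE x @ r = encE y @ s"
  obtain a b t where x: "x = ((a, b), t)" by (metis prod.collapse)
  obtain a' b' t' where y: "y = ((a', b'), t')" by (metis prod.collapse)
  from h x y have "code a @ (code b @ [t] @ r) = code a' @ (code b' @ [t'] @ s)" by simp
  from code_app_inj[OF this] have 1: "a = a'" "code b @ ([t] @ r) = code b' @ ([t'] @ s)" by auto
  from code_app_inj[OF 1(2)] have "b = b'" "t = t'" "r = s" by auto
  with 1 x y show ?thesis by simp
qed

lemma encOuts_app_inj: "encOuts x @ r = encOuts y @ s \<Longrightarrow> x = y \<and> r = s"
proof (induction x arbitrary: y r s)
  case Nil then show ?case by (cases y) auto
next
  case (Cons e es)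
  then obtain e' es' where y: "y = e' # es'" by (cases y) auto
  from Cons.prems y have "encE e @ (encOuts es @ r) = encE e' @ (encOuts es' @ s)" by simp
  from encE_app_inj[OF this] have "e = e'" "encOuts es @ r = encOuts es' @ s" by auto
  with Cons.IH y show ?case by blast
qed

lemma encL_app_inj: "encL x @ r = encL y @ s \<Longrightarrow> x = y \<and> r = s"
proof (induction x arbitrary: y r s)
  case Nil then show ?case by (cases y) auto
next
  case (Cons e es)
  obtain a b os where e: "e = ((a, b), os)" by (metis prod.collapse)
  from Cons.prems e obtain e' es' where y: "y = e' # es'" by (cases y) auto
  obtain a' b' os' where e': "e' = ((a', b'), os')" by (metis prod.collapse)
  from Cons.prems y e e' have "code a @ (code b @ encOuts os @ encL es @ r) = code a' @ (code b' @ encOuts os' @ encL es' @ s)" by simp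
  from code_app_inj[OF this] have 1: "a = a'" "code b @ (encOuts os @ encL es @ r) = code b' @ (encOuts os' @ encL es' @ s)" by auto
  from code_app_inj[OF 1(2)] have 2: "b = b'" "encOuts os @ (encL es @ r) = encOuts os' @ (encL es' @ s)" by auto
  from encOuts_app_inj[OF 2(2)] have 3: "os = os'" "encL es @ r = encL es' @ s" by auto
  from Cons.IH[OF 3(2)] 1 2 3 e e' y show ?case by simp
qed

lemma inj_encL: "inj encL"
  by (rule injI) (use encL_app_inj[where r = "[]" and s = "[]"] in simp)

lemma encOuts_len:
  assumes "\<forall>e\<in>set es. fst (fst e) < 2 ^ k \<and> snd (fst e) < 2 ^ k"
  shows "length (encOuts es) \<le> 1 + length es * (4 * k + 4)"
  using assms
proof (induction es)
  case Nil then show ?case by simp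
next
  case (Cons e es)
  obtain a b t where e: "e = ((a, b), t)" by (metis prod.collapse)
  have "length (code a) \<le> 2 * k + 1" "length (code b) \<le> 2 * k + 1"
    using Cons.prems e code_len[of a k] code_len[of b k] by auto
  with Cons e show ?case by simp
qed

lemma encL_len:
  assumes "\<forall>e\<in>set L. fst (fst e) < 2 ^ k \<and> snd (fst e) < 2 ^ k \<and> length (snd e) \<le> d
     \<and> (\<forall>e'\<in>set (snd e). fst (fst e') < 2 ^ k \<and> snd (fst e') < 2 ^ k)"
  shows "length (encL L) \<le> 1 + length L * ((d + 1) * (4 * k + 4))"
  using assms
proof (induction L)
  case Nil then show ?case by simp
next
  case (Cons e es)
  obtain a b os where e: "e = ((a, b), os)" by (metis prod.collapse)
  have "length (code a) \<le> 2 * k + 1" "length (code b) \<le> 2 * k + 1"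
    using Cons.prems e code_len[of a k] code_len[of b k] by auto
  moreover have "length (encOuts os) \<le> 1 + length os * (4 * k + 4)"
    using Cons.prems e by (intro encOuts_len) auto
  moreover have "length os * (4 * k + 4) \<le> d * (4 * k + 4)" using Cons.prems e by simp
  ultimately have "length (encL [e]) \<le> (d + 1) * (4 * k + 4) + 1" using e
    by (simp only: encL.simps length_Cons length_append list.size) (simp add: algebra_simps)
  moreover have "length (encL (e # es)) = length (encL [e]) - 1 + length (encL es)"
    using e by simp
  ultimately show ?case using Cons by (simp add: algebra_simps)
qed



lemma orient:
  assumes "finite S"
    and "\<forall>S'\<subseteq>S. S' \<noteq> {} \<longrightarrow> (\<exists>v\<in>S'. card {w \<in> S'. {v, w} \<in> E} \<le> d)"
  shows "\<exists>out. \<forall>a\<in>S. out a \<subseteq> S \<and> card (out a) \<le> d \<and> (\<forall>b\<in>out a. {a, b} \<in> E)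
           \<and> (\<forall>b\<in>S. {a, b} \<in> E \<longrightarrow> b \<in> out a \<or> a \<in> out b)"
  using assms
proof (induction S rule: finite_psubset_induct)
  case (psubset S)
  show ?case
  proof (cases "S = {}")
    case True then show ?thesis by auto
  next
    case False
    then obtain v where v: "v \<in> S" "card {w \<in> S. {v, w} \<in> E} \<le> d" using psubset.prems(1)[rule_format, of S] by blast
    have "S - {v} \<subset> S" using v by auto
    moreover have "\<forall>S'\<subseteq>S - {v}. S' \<noteq> {} \<longrightarrow> (\<exists>v\<in>S'. card {w \<in> S'. {v, w} \<in> E} \<le> d)"
      using psubset.prems(1) by (meson Diff_subset order_trans)
    ultimately obtain out where out: "\<forall>a\<in>S - {v}. out a \<subseteq> S - {v} \<and> card (out a) \<le> d \<and> (\<forall>b\<in>out a. {a, b} \<in> E)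
           \<and> (\<forall>b\<in>S - {v}. {a, b} \<in> E \<longrightarrow> b \<in> out a \<or> a \<in> out b)"
      using psubset.IH[of "S - {v}"] by presburger
    define out' where "out' = out(v := {w \<in> S. {v, w} \<in> E})"
    have "\<forall>a\<in>S. out' a \<subseteq> S \<and> card (out' a) \<le> d \<and> (\<forall>b\<in>out' a. {a, b} \<in> E)
           \<and> (\<forall>b\<in>S. {a, b} \<in> E \<longrightarrow> b \<in> out' a \<or> a \<in> out' b)"
    proof
      fix a assume a: "a \<in> S"
      show "out' a \<subseteq> S \<and> card (out' a) \<le> d \<and> (\<forall>b\<in>out' a. {a, b} \<in> E)
           \<and> (\<forall>b\<in>S. {a, b} \<in> E \<longrightarrow> b \<in> out' a \<or> a \<in> out' b)"
      proof (cases "a = v")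
        case True
        have "out' a = {w \<in> S. {v, w} \<in> E}" using True by (simp add: out'_def)
        then show ?thesis using v True by auto
      next
        case False
        then have "out' a = out a" by (simp add: out'_def)
        moreover have "\<forall>b\<in>S. {a, b} \<in> E \<longrightarrow> b \<in> out' a \<or> a \<in> out' b"
        proof (intro ballI impI)
          fix b assume b: "b \<in> S" "{a, b} \<in> E"
          show "b \<in> out' a \<or> a \<in> out' b"
          proof (cases "b = v")
            case True
            have "{b, a} \<in> E" using b(2) by (simp add: insert_commute)
            then have "a \<in> out' b" using True a by (simp add: out'_def)
            then show ?thesis by blast
          next
            case False
            have "b \<in> out a \<or> a \<in> out b" using out a b \<open>a \<noteq> v\<close> False by blast
            then show ?thesis using \<open>a \<noteq> v\<close> False by (simp add: out'_def)
          qed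
        qed
        moreover have "out a \<subseteq> S \<and> card (out a) \<le> d \<and> (\<forall>b\<in>out a. {a, b} \<in> E)" using out a False by blast
        ultimately show ?thesis by auto
      qed
    qed
    then show ?thesis by blast
  qed
qed



lemma anc_eq_take: "anc_eq x u \<longleftrightarrow> take (length x) u = x"
  unfolding anc_eq_def by (metis append_take_drop_id append_eq_conv_conj)

lemma anc_eq_trans: "anc_eq a b \<Longrightarrow> anc_eq b c \<Longrightarrow> anc_eq a c"
  unfolding anc_eq_def by auto

lemma anc_eq_take2: "anc_eq (take i u) u"
  unfolding anc_eq_def by (metis append_take_drop_id)

lemma take_in_T: "full_binary_tree T \<Longrightarrow> u \<in> T \<Longrightarrow> take i u \<in> T"
  unfolding full_binary_tree_def using anc_eq_take2 by blast

definition lm :: "node set \<Rightarrow> bool \<Rightarrow> node \<Rightarrow> node" where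
  "lm T b w = w @ replicate (GREATEST k. w @ replicate k b \<in> T) b"

lemma lm_props:
  assumes "full_binary_tree T" "depth_at_most T h" "w \<in> T"
  shows "lm T b w \<in> leaves T" "\<exists>k. lm T b w = w @ replicate k b"
proof -
  let ?P = "\<lambda>k. w @ replicate k b \<in> T"
  have bd: "\<forall>k. ?P k \<longrightarrow> k \<le> h" using assms(2) unfolding depth_at_most_def by fastforce
  have P0: "?P 0" using assms(3) by simp
  have G: "?P (Greatest ?P)" using GreatestI_nat[of ?P 0 h] P0 bd by blast
  have notS: "\<not> ?P (Suc (Greatest ?P))"
    using Greatest_le_nat[of ?P "Suc (Greatest ?P)" h] bd by fastforce
  have "lm T b w @ [b] = w @ replicate (Suc (Greatest ?P)) b"
    unfolding lm_def by (simp add: replicate_append_same)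
  with notS have nb: "lm T b w @ [b] \<notin> T" by simp
  have fb: "\<forall>v\<in>T. (v @ [False] \<in> T) = (v @ [True] \<in> T)" using assms(1) by (simp add: full_binary_tree_def)
  have G': "lm T b w \<in> T" using G unfolding lm_def .
  have nb2: "lm T b w @ [\<not>b] \<notin> T"
    using fb[rule_format, OF G'] nb by (cases b) simp_all
  have "lm T b w @ [False] \<notin> T \<and> lm T b w @ [True] \<notin> T"
    using nb nb2 by (cases b) simp_all
  then show "lm T b w \<in> leaves T" using G' unfolding leaves_def by blast
  show "\<exists>k. lm T b w = w @ replicate k b" unfolding lm_def by blast
qed

lemma rep_pref:
  assumes "v @ replicate k b = w @ replicate k' b" "length v \<le> length w"
  shows "\<exists>m. w = v @ replicate m b"
proof -
  have "take (length w) (v @ replicate k b) = w" using assms(1) by simp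
  then have "w = v @ take (length w - length v) (replicate k b)" using assms(2) by simp
  then show ?thesis by (metis take_replicate)
qed

lemma lmrm_inj:
  assumes "lm T False v = lm T False w" "lm T True v = lm T True w"
  shows "v = w"
proof -
  have main: "v = w" if h1: "lm T False v = lm T False w" and h2: "lm T True v = lm T True w" and h3: "length v \<le> length w" for v w
  proof -
    from h1 obtain m where m: "w = v @ replicate m False"
      using rep_pref[OF _ h3] unfolding lm_def by blast
    from h2 obtain m' where m': "w = v @ replicate m' True"
      using rep_pref[OF _ h3] unfolding lm_def by blast
    from m m' have "replicate m False = replicate m' True" by simp
    then have "m = 0" by (cases m; cases m') auto
    with m show ?thesis by simp
  qed
  show ?thesis
  proof (cases "length v \<le> length w")
    case True then show ?thesis using main assms by blast
  next
    case False then show ?thesis using main[of w v] assms by simp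
  qed
qed



definition ale :: "'a list \<Rightarrow> 'a \<Rightarrow> 'a \<Rightarrow> bool" where
  "ale P x y \<longleftrightarrow> (\<exists>i j. i \<le> j \<and> j < length P \<and> P ! i = x \<and> P ! j = y)"

definition edgesL :: "lab \<Rightarrow> ((nat \<times> nat) set \<times> bool) set" where
  "edgesL L = {({fst (L ! i), y}, s) | i y s. i < length L \<and> (y, s) \<in> set (snd (L ! i))}"

definition Rd :: "lab \<Rightarrow> lab \<Rightarrow> nat \<times> nat \<Rightarrow> nat \<times> nat \<Rightarrow> bool" where
  "Rd Lu Lv x y \<longleftrightarrow> ale (map fst Lu) x y \<or> ale (map fst Lv) x y"

definition gple :: "('a \<Rightarrow> 'a \<Rightarrow> bool) \<Rightarrow> 'a set \<Rightarrow> 'a set \<Rightarrow> bool" where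
  "gple R X Y \<longleftrightarrow> (\<exists>a b a' b'. X = {a, b} \<and> Y = {a', b'} \<and> R a a' \<and> R b b')"

definition Fdec :: "lab \<Rightarrow> lab \<Rightarrow> bool" where
  "Fdec Lu Lv \<longleftrightarrow> (\<exists>X. (X, True) \<in> edgesL Lu \<union> edgesL Lv
      \<and> gple (Rd Lu Lv) X {last (map fst Lu), last (map fst Lv)}
      \<and> \<not> (\<exists>Y. (Y, False) \<in> edgesL Lu \<union> edgesL Lv \<and> gple (Rd Lu Lv) X Y \<and> X \<noteq> Y
             \<and> gple (Rd Lu Lv) Y {last (map fst Lu), last (map fst Lv)}))"

lemma pair_le_gple: "pair_le p q = gple anc_eq p q"
  unfolding pair_le_def gple_def by simp

lemma gple_transfer:
  assumes "inj_on I T" "p \<subseteq> T" "q \<subseteq> T" "\<forall>x\<in>T. \<forall>y\<in>T. R (I x) (I y) = R0 x y"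
  shows "gple R (I ` p) (I ` q) = gple R0 p q"
proof
  assume "gple R (I ` p) (I ` q)"
  then obtain a b a' b' where h: "I ` p = {a, b}" "I ` q = {a', b'}" "R a a'" "R b b'"
    unfolding gple_def by blast
  obtain a0 b0 where ab: "a0 \<in> p" "b0 \<in> p" "a = I a0" "b = I b0" using h(1)
    by (metis imageE insertI1 insert_commute)
  obtain a1 b1 where ab1: "a1 \<in> q" "b1 \<in> q" "a' = I a1" "b' = I b1" using h(2)
    by (metis imageE insertI1 insert_commute)
  have "I ` p = I ` {a0, b0}" using h(1) ab by simp
  moreover have "{a0, b0} \<subseteq> T" using ab assms(2) by auto
  ultimately have p: "p = {a0, b0}" using inj_on_image_eq_iff[OF assms(1) assms(2)] by blast
  have "I ` q = I ` {a1, b1}" using h(2) ab1 by simp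
  moreover have "{a1, b1} \<subseteq> T" using ab1 assms(3) by auto
  ultimately have q: "q = {a1, b1}" using inj_on_image_eq_iff[OF assms(1) assms(3)] by blast
  have "R0 a0 a1" "R0 b0 b1" using assms(4) h(3,4) ab ab1 assms(2,3) by (auto simp: subset_iff)
  then show "gple R0 p q" unfolding gple_def using p q by blast
next
  assume "gple R0 p q"
  then obtain a b a' b' where h: "p = {a, b}" "q = {a', b'}" "R0 a a'" "R0 b b'"
    unfolding gple_def by blast
  have "R (I a) (I a')" "R (I b) (I b')" using assms(2-4) h by auto
  then show "gple R (I ` p) (I ` q)" unfolding gple_def using h by auto
qed

locale stm =
  fixes T :: "node set" and A B :: "node set set" and I :: "node \<Rightarrow> nat \<times> nat"
    and out :: "node \<Rightarrow> node set" and olist :: "node \<Rightarrow> node list"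
  assumes stm: "signed_tree_model T A B"
    and inj: "inj_on I T"
    and out_sub: "\<forall>a\<in>T. out a \<subseteq> T"
    and out_edge: "\<forall>a\<in>T. \<forall>b\<in>out a. {a, b} \<in> A \<union> B"
    and out_cov: "\<forall>a\<in>T. \<forall>b\<in>T. {a, b} \<in> A \<union> B \<longrightarrow> b \<in> out a \<or> a \<in> out b"
    and olist: "\<forall>a\<in>T. set (olist a) = out a"
begin

definition labu :: "node \<Rightarrow> lab" where
  "labu u = map (\<lambda>i. (I (take i u), map (\<lambda>b. (I b, {take i u, b} \<in> B)) (olist (take i u))))
              [0..<Suc (length u)]"

lemma fb: "full_binary_tree T" using stm unfolding signed_tree_model_def by blast

lemma tk: "u \<in> T \<Longrightarrow> take i u \<in> T" using take_in_T[OF fb] .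

lemma mapfst: "map fst (labu u) = map (\<lambda>i. I (take i u)) [0..<Suc (length u)]"
  unfolding labu_def by simp

lemma last_lab: "last (map fst (labu u)) = I u"
  unfolding mapfst by (simp del: upt_Suc add: upt_Suc_append)

lemma anc_len: "anc_eq x y \<Longrightarrow> length x \<le> length y"
  unfolding anc_eq_def by auto

lemma ale_lab:
  assumes "u \<in> T" "x \<in> T" "y \<in> T"
  shows "ale (map fst (labu u)) (I x) (I y) \<longleftrightarrow> anc_eq x y \<and> anc_eq y u"
proof
  assume "ale (map fst (labu u)) (I x) (I y)"
  then obtain i j where ij: "i \<le> j" "j < Suc (length u)" "I (take i u) = I x" "I (take j u) = I y"
    unfolding ale_def mapfst by (auto simp del: upt_Suc)
  have "take i u = x" using inj ij(3) tk[OF assms(1)] assms(2) by (meson inj_on_eq_iff)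
  moreover have "take j u = y" using inj ij(4) tk[OF assms(1)] assms(3) by (meson inj_on_eq_iff)
  moreover have "anc_eq (take i u) (take j u)" unfolding anc_eq_take using ij by (simp add: min_def)
  ultimately show "anc_eq x y \<and> anc_eq y u" using anc_eq_take2 by blast
next
  assume h: "anc_eq x y \<and> anc_eq y u"
  then have "anc_eq x u" using anc_eq_trans by blast
  then have "take (length x) u = x" "take (length y) u = y" using h anc_eq_take by auto
  moreover have "length x \<le> length y" "length y \<le> length u" using h anc_len by auto
  ultimately show "ale (map fst (labu u)) (I x) (I y)"
    unfolding ale_def mapfst
    by (intro exI[of _ "length x"] exI[of _ "length y"]) (simp del: upt_Suc add: nth_append)
qed

lemma edges_lab:
  assumes "u \<in> T"
  shows "(X, s) \<in> edgesL (labu u) \<longleftrightarrow> (\<exists>a b. anc_eq a u \<and> b \<in> out a \<and> X = {I a, I b} \<and> s = ({a, b} \<in> B))"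
proof
  assume "(X, s) \<in> edgesL (labu u)"
  then obtain i y where h: "i < Suc (length u)" "X = {I (take i u), y}"
    "(y, s) \<in> set (map (\<lambda>b. (I b, {take i u, b} \<in> B)) (olist (take i u)))"
    unfolding edgesL_def labu_def by (auto simp del: upt_Suc)
  then obtain b where b: "b \<in> set (olist (take i u))" "y = I b" "s = ({take i u, b} \<in> B)" by auto
  have "b \<in> out (take i u)" using b olist tk[OF assms] by auto
  then show "\<exists>a b. anc_eq a u \<and> b \<in> out a \<and> X = {I a, I b} \<and> s = ({a, b} \<in> B)"
    using h b anc_eq_take2 by blast
next
  assume "\<exists>a b. anc_eq a u \<and> b \<in> out a \<and> X = {I a, I b} \<and> s = ({a, b} \<in> B)"
  then obtain a b where h: "anc_eq a u" "b \<in> out a" "X = {I a, I b}" "s = ({a, b} \<in> B)" by blast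
  have a: "take (length a) u = a" "length a < Suc (length u)" using h(1) anc_eq_take anc_len[OF h(1)] by auto
  have "a \<in> T" using tk[OF assms] a by metis
  then have "b \<in> set (olist a)" using olist h by auto
  then have "(I b, s) \<in> set (map (\<lambda>b. (I b, {take (length a) u, b} \<in> B)) (olist (take (length a) u)))"
    using a h by auto
  then show "(X, s) \<in> edgesL (labu u)"
    unfolding edgesL_def labu_def using a h
    by (intro CollectI exI[of _ "length a"] exI[of _ "I b"] exI[of _ s]) (simp del: upt_Suc)
qed


lemma main_correct:
  assumes uT: "u \<in> T" and vT: "v \<in> T"
  shows "Fdec (labu u) (labu v) \<longleftrightarrow> model_adj A B u v"
proof -
  define N where "N = {x. anc_eq x u \<or> anc_eq x v}"
  have NT: "N \<subseteq> T"
  proof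
    fix x assume "x \<in> N"
    then show "x \<in> T" using fb uT vT unfolding N_def full_binary_tree_def by blast
  qed
  have uvN: "{u, v} \<subseteq> N" unfolding N_def anc_eq_def by auto
  let ?R = "Rd (labu u) (labu v)"
  have Rc: "\<forall>x\<in>T. \<forall>y\<in>T. ?R (I x) (I y) = (anc_eq x y \<and> y \<in> N)"
    unfolding Rd_def N_def using ale_lab uT vT by auto
  have K1: "gple ?R (I ` p) (I ` q) \<longleftrightarrow> pair_le p q \<and> q \<subseteq> N" if "p \<subseteq> T" "q \<subseteq> T" for p q
  proof -
    have "gple ?R (I ` p) (I ` q) = gple (\<lambda>x y. anc_eq x y \<and> y \<in> N) p q"
      by (rule gple_transfer[OF inj that Rc])
    also have "\<dots> \<longleftrightarrow> pair_le p q \<and> q \<subseteq> N"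
      unfolding gple_def pair_le_def by (rule iffI) (blast, fastforce)
    finally show ?thesis .
  qed
  have K2: "p \<subseteq> N" if h0: "pair_le p {u, v}" for p
  proof -
    obtain a b a' b' where h: "p = {a, b}" "{u, v} = {a', b'}" "anc_eq a a'" "anc_eq b b'"
      using h0 unfolding pair_le_def by blast
    have "a' \<in> N" "b' \<in> N" using h(2) uvN by auto
    then show ?thesis using h anc_eq_trans unfolding N_def by auto
  qed
  have top: "{last (map fst (labu u)), last (map fst (labu v))} = I ` {u, v}"
    using last_lab by simp
  have K1t: "gple ?R (I ` p) (I ` {u, v}) \<longleftrightarrow> pair_le p {u, v}" if "p \<subseteq> T" for p
  proof -
    have "{u, v} \<subseteq> T" using uT vT by auto
    from K1[OF that this] uvN show ?thesis by blast
  qed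
  have tA: "\<forall>p\<in>A. transversal_pair T p" and tB: "\<forall>p\<in>B. transversal_pair T p"
    using stm unfolding signed_tree_model_def by simp_all
  have tAB: "\<forall>p\<in>A \<union> B. transversal_pair T p" using tA tB by blast
  have K3: "p \<subseteq> T \<and> (\<exists>a b. p = {a, b} \<and> a \<in> T \<and> b \<in> T)" if h3: "p \<in> A \<union> B" for p
  proof -
    have "transversal_pair T p" using tAB h3 by blast
    then obtain x y where "p = {x, y}" "x \<in> T" "y \<in> T" unfolding transversal_pair_def by blast
    then show ?thesis by blast
  qed
  have K4: "\<exists>a b. a \<in> N \<and> b \<in> out a \<and> p = {a, b}" if h1: "p \<in> A \<union> B" and h2: "p \<subseteq> N" for p
  proof -
    obtain a b where ab: "p = {a, b}" "a \<in> T" "b \<in> T" using K3 h1 by blast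
    have "b \<in> out a \<or> a \<in> out b" using out_cov ab h1 by blast
    then show ?thesis using ab h2 by (metis insert_commute insert_subset)
  qed
  have Es: "(X, s) \<in> edgesL (labu u) \<union> edgesL (labu v) \<longleftrightarrow>
      (\<exists>a b. a \<in> N \<and> b \<in> out a \<and> X = I ` {a, b} \<and> s = ({a, b} \<in> B))" for X s
    unfolding N_def Un_iff edges_lab[OF uT] edges_lab[OF vT] image_insert image_empty mem_Collect_eq by blast
  have AB: "A \<inter> B = {}" using stm unfolding signed_tree_model_def by blast
  have outT: "b \<in> T" if "a \<in> N" "b \<in> out a" for a b using out_sub that NT by blast
  have outE: "{a, b} \<in> A \<union> B" if "a \<in> N" "b \<in> out a" for a b using out_edge that NT by blast
  show ?thesis
  proof
    assume F: "Fdec (labu u) (labu v)"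
    then obtain X where X: "(X, True) \<in> edgesL (labu u) \<union> edgesL (labu v)"
      "gple ?R X (I ` {u, v})"
      "\<not> (\<exists>Y. (Y, False) \<in> edgesL (labu u) \<union> edgesL (labu v) \<and> gple ?R X Y \<and> X \<noteq> Y
             \<and> gple ?R Y (I ` {u, v}))"
      unfolding Fdec_def top by blast
    from X(1) obtain a b where ab: "a \<in> N" "b \<in> out a" "X = I ` {a, b}" "{a, b} \<in> B"
      unfolding Es by blast
    have pT: "{a, b} \<subseteq> T" using ab NT outT by auto
    have ple: "pair_le {a, b} {u, v}" using K1t[OF pT] X(2) ab by simp
    have "\<not> (\<exists>q\<in>A. pair_less {a, b} q \<and> pair_le q {u, v})"
    proof
      assume "\<exists>q\<in>A. pair_less {a, b} q \<and> pair_le q {u, v}"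
      then obtain q where q: "q \<in> A" "pair_less {a, b} q" "pair_le q {u, v}" by blast
      have qN: "q \<subseteq> N" using K2 q(3) by blast
      obtain a' b' where ab': "a' \<in> N" "b' \<in> out a'" "q = {a', b'}" using K4[OF _ qN] q(1) by blast
      have qT: "q \<subseteq> T" using qN NT by blast
      have "{a', b'} \<notin> B" using q(1) ab'(3) AB by blast
      then have "(I ` q, False) \<in> edgesL (labu u) \<union> edgesL (labu v)" unfolding Es using ab' by blast
      moreover have "gple ?R X (I ` q)" using K1[OF pT qT] q(2) qN ab(3) unfolding pair_less_def by simp
      moreover have "X \<noteq> I ` q" using ab(3) q(2) inj_on_image_eq_iff[OF inj pT qT] unfolding pair_less_def by simp
      moreover have "gple ?R (I ` q) (I ` {u, v})" using K1t[OF qT] q(3) by simp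
      ultimately show False using X(3) by blast
    qed
    then show "model_adj A B u v" unfolding model_adj_def using ab(4) ple by blast
  next
    assume "model_adj A B u v"
    then obtain p where p: "p \<in> B" "pair_le p {u, v}" "\<not> (\<exists>q\<in>A. pair_less p q \<and> pair_le q {u, v})"
      unfolding model_adj_def by blast
    have pN: "p \<subseteq> N" using K2 p(2) by blast
    have pT: "p \<subseteq> T" using pN NT by blast
    obtain a b where ab: "a \<in> N" "b \<in> out a" "p = {a, b}" using K4[OF _ pN] p(1) by blast
    have X1: "(I ` p, True) \<in> edgesL (labu u) \<union> edgesL (labu v)" unfolding Es using ab p(1) by blast
    have X2: "gple ?R (I ` p) (I ` {u, v})" using K1t[OF pT] p(2) by simp
    have X3: "\<not> (\<exists>Y. (Y, False) \<in> edgesL (labu u) \<union> edgesL (labu v) \<and> gple ?R (I ` p) Y \<and> I ` p \<noteq> Y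
             \<and> gple ?R Y (I ` {u, v}))"
    proof
      assume "\<exists>Y. (Y, False) \<in> edgesL (labu u) \<union> edgesL (labu v) \<and> gple ?R (I ` p) Y \<and> I ` p \<noteq> Y
             \<and> gple ?R Y (I ` {u, v})"
      then obtain Y where Y: "(Y, False) \<in> edgesL (labu u) \<union> edgesL (labu v)" "gple ?R (I ` p) Y"
        "I ` p \<noteq> Y" "gple ?R Y (I ` {u, v})" by blast
      from Y(1) obtain a' b' where ab': "a' \<in> N" "b' \<in> out a'" "Y = I ` {a', b'}" "{a', b'} \<notin> B"
        unfolding Es by blast
      have qT: "{a', b'} \<subseteq> T" using ab' NT outT by auto
      have qA: "{a', b'} \<in> A" using outE[OF ab'(1,2)] ab'(4) by blast
      have "pair_le p {a', b'}" using K1[OF pT qT] Y(2) ab'(3) by simp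
      moreover have "p \<noteq> {a', b'}" using Y(3) ab'(3) by blast
      moreover have "pair_le {a', b'} {u, v}" using K1t[OF qT] Y(4) ab'(3) by simp
      ultimately show False using p(3) qA unfolding pair_less_def by blast
    qed
    show "Fdec (labu u) (labu v)" unfolding Fdec_def top using X1 X2 X3 by blast
  qed
qed

end


lemma arith_bound:
  fixes L :: real
  assumes "d \<ge> 1" "h \<ge> 1" "L \<ge> 1" "real k < L + 1"
  shows "1 + real h * ((real d + 1) * (4 * real k + 4)) \<le> 25 * real d * real h * L"
proof -
  have a: "real d + 1 \<le> 2 * real d" using assms by simp
  have b: "4 * real k + 4 \<le> 12 * L" using assms by simp
  have "(real d + 1) * (4 * real k + 4) \<le> (2 * real d) * (12 * L)"
    by (rule mult_mono[OF a b]) (use assms in auto)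
  then have c: "real h * ((real d + 1) * (4 * real k + 4)) \<le> real h * ((2 * real d) * (12 * L))"
    by (rule mult_left_mono) simp
  have "1 \<le> real d * real h * L"
    using assms by (metis mult_ge1_I of_nat_1 of_nat_le_iff order.trans order_refl)
  with c show ?thesis by (simp add: algebra_simps)
qed

lemma log_bound:
  assumes "2 ^ (k - 1) < n" "k \<ge> 1"
  shows "real k < log 2 (real n) + 1"
proof -
  have "log 2 (2 ^ (k - 1)) < log 2 (real n)"
    using assms(1) by (subst log_less_cancel_iff) (auto simp del: of_nat_power simp add: of_nat_power[symmetric])
  then have "real (k - 1) < log 2 (real n)" by simp
  then show ?thesis using assms(2) by (simp add: of_nat_diff)
qed

theorem proposition4p1:
  "\<exists>C::real. C > 0 \<and> (\<forall>d h :: nat. d \<ge> 1 \<longrightarrow> h \<ge> 1 \<longrightarrow>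
     labeling_scheme (has_signed_tree_model d h)
       (\<lambda>n. C * real d * real h * log 2 (real n)))"
proof (intro exI[of _ 25] conjI allI impI)
  fix d h :: nat assume d1: "d \<ge> 1" and h1: "h \<ge> 1"
  show "labeling_scheme (has_signed_tree_model d h) (\<lambda>n. 25 * real d * real h * log 2 (real n))"
    unfolding labeling_scheme_def
  proof (intro exI[of _ "\<lambda>x y. Fdec (inv encL x) (inv encL y)"] allI impI)
    fix V and E :: "nat \<Rightarrow> nat \<Rightarrow> bool"
    assume finV: "finite V" and n2: "card V \<ge> 2" and hm: "has_signed_tree_model d h V E"
    define n where "n = card V"
    from hm obtain T A B \<phi> where st: "signed_tree_model T A B" and wd: "width_at_most T A B d"
      and dp: "depth_at_most T h" and bj: "bij_betw \<phi> V (leaves T)"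
      and ad: "\<forall>u\<in>V. \<forall>v\<in>V. u \<noteq> v \<longrightarrow> (E u v \<longleftrightarrow> model_adj A B (\<phi> u) (\<phi> v))"
      unfolding has_signed_tree_model_def by blast
    have fbt: "full_binary_tree T" using st unfolding signed_tree_model_def by blast
    have finT: "finite T" using fbt unfolding full_binary_tree_def by blast
    obtain out where out: "\<forall>a\<in>T. out a \<subseteq> T \<and> card (out a) \<le> d \<and> (\<forall>b\<in>out a. {a, b} \<in> A \<union> B)
           \<and> (\<forall>b\<in>T. {a, b} \<in> A \<union> B \<longrightarrow> b \<in> out a \<or> a \<in> out b)"
      using orient[OF finT, of "A \<union> B" d] wd unfolding width_at_most_def by blast
    define olist where "olist a = (SOME xs. set xs = out a \<and> distinct xs)" for a
    have olist: "set (olist a) = out a \<and> distinct (olist a)" if "a \<in> T" for a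
    proof -
      have "finite (out a)" using out that finT finite_subset by blast
      then show ?thesis unfolding olist_def using someI_ex[OF finite_distinct_list] by blast
    qed
    obtain idx where idx: "bij_betw idx V {0..<n}" using ex_bij_betw_finite_nat[OF finV] n_def by blast
    define \<psi> where "\<psi> = inv_into V \<phi>"
    have bpsi: "bij_betw \<psi> (leaves T) V" unfolding \<psi>_def by (rule bij_betw_inv_into[OF bj])
    define I where "I w = (idx (\<psi> (lm T False w)), idx (\<psi> (lm T True w)))" for w
    have lmL: "lm T b w \<in> leaves T" if "w \<in> T" for b w using lm_props(1)[OF fbt dp that] .
    have injI: "inj_on I T"
    proof (rule inj_onI)
      fix x y assume x: "x \<in> T" and y: "y \<in> T" and e: "I x = I y"
      have inj2: "inj_on (idx \<circ> \<psi>) (leaves T)"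
        using bij_betw_imp_inj_on[OF bij_betw_trans[OF bpsi idx]] .
      have "lm T False x = lm T False y"
        using e inj2 lmL[OF x] lmL[OF y] unfolding I_def by (metis comp_apply inj_onD prod.inject)
      moreover have "lm T True x = lm T True y"
        using e inj2 lmL[OF x] lmL[OF y] unfolding I_def by (metis comp_apply inj_onD prod.inject)
      ultimately show "x = y" by (rule lmrm_inj)
    qed
    interpret S: stm T A B I out olist
    proof -
      have o1: "\<forall>a\<in>T. out a \<subseteq> T" using out by blast
      have o2: "\<forall>a\<in>T. \<forall>b\<in>out a. {a, b} \<in> A \<union> B" using out by blast
      have o3: "\<forall>a\<in>T. \<forall>b\<in>T. {a, b} \<in> A \<union> B \<longrightarrow> b \<in> out a \<or> a \<in> out b" using out by blast
      have o4: "\<forall>a\<in>T. set (olist a) = out a" using olist by blast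
      show "stm T A B I out olist" by (rule stm.intro[OF st injI o1 o2 o3 o4])
    qed
    define lab where "lab x = encL (S.labu (\<phi> x))" for x
    define k where "k = (LEAST k. n \<le> 2 ^ k)"
    have ex: "n \<le> 2 ^ n" using less_exp[of n] by simp
    have nk: "n \<le> 2 ^ k" unfolding k_def by (rule LeastI[of _ n]) (rule ex)
    have k1: "k \<ge> 1"
    proof (rule ccontr)
      assume "\<not> k \<ge> 1" then have "k = 0" by simp
      with nk n2 n_def show False by simp
    qed
    have nk2: "2 ^ (k - 1) < n"
    proof (rule ccontr)
      assume "\<not> 2 ^ (k - 1) < n"
      then have "n \<le> 2 ^ (k - 1)" by simp
      then have "k \<le> k - 1" unfolding k_def by (rule Least_le)
      with k1 show False by simp
    qed
    have Ilt: "fst (I w) < 2 ^ k \<and> snd (I w) < 2 ^ k" if "w \<in> T" for w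
    proof -
      have a: "\<psi> (lm T b w) \<in> V" for b using bij_betw_apply[OF bpsi lmL[OF that]] .
      have b: "idx (\<psi> (lm T b w)) < n" for b using bij_betw_apply[OF idx a[of b]] by simp
      have "idx (\<psi> (lm T b w)) < 2 ^ k" for b using b[of b] nk by linarith
      then show ?thesis unfolding I_def by simp
    qed
    have L2: "log 2 (real n) \<ge> 1"
    proof -
      have "log 2 (2::real) \<le> log 2 (real n)" using n2 n_def by (subst log_le_cancel_iff) auto
      then show ?thesis by simp
    qed
    have kb: "real k < log 2 (real n) + 1" by (rule log_bound[OF nk2 k1])
    show "\<exists>lab :: nat \<Rightarrow> bool list. (\<forall>v\<in>V. real (length (lab v)) \<le> 25 * real d * real h * log 2 (real (card V)))
         \<and> (\<forall>u\<in>V. \<forall>v\<in>V. u \<noteq> v \<longrightarrow> (Fdec (inv encL (lab u)) (inv encL (lab v)) \<longleftrightarrow> E u v))"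
    proof (intro exI[of _ lab] conjI ballI impI)
      fix v assume v: "v \<in> V"
      have uT: "\<phi> v \<in> T" using bj v bij_betw_apply leaves_def by fastforce
      have "\<forall>e\<in>set (S.labu (\<phi> v)). fst (fst e) < 2 ^ k \<and> snd (fst e) < 2 ^ k \<and> length (snd e) \<le> d
        \<and> (\<forall>e'\<in>set (snd e). fst (fst e') < 2 ^ k \<and> snd (fst e') < 2 ^ k)"
      proof
        fix e assume "e \<in> set (S.labu (\<phi> v))"
        then obtain i where e: "e = (I (take i (\<phi> v)), map (\<lambda>b. (I b, {take i (\<phi> v), b} \<in> B)) (olist (take i (\<phi> v))))"
          unfolding S.labu_def by (auto simp del: upt_Suc)
        have tT: "take i (\<phi> v) \<in> T" using S.tk[OF uT] .
        have "length (olist (take i (\<phi> v))) = card (out (take i (\<phi> v)))"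
          using olist[OF tT] distinct_card by metis
        also have "\<dots> \<le> d" using out tT by blast
        finally have ln: "length (olist (take i (\<phi> v))) \<le> d" .
        have "\<forall>b\<in>set (olist (take i (\<phi> v))). b \<in> T" using olist[OF tT] out tT by blast
        then show "fst (fst e) < 2 ^ k \<and> snd (fst e) < 2 ^ k \<and> length (snd e) \<le> d
        \<and> (\<forall>e'\<in>set (snd e). fst (fst e') < 2 ^ k \<and> snd (fst e') < 2 ^ k)"
          using e Ilt[OF tT] Ilt ln by auto
      qed
      from encL_len[OF this] have "length (lab v) \<le> 1 + Suc (length (\<phi> v)) * ((d + 1) * (4 * k + 4))"
        unfolding lab_def S.labu_def by simp
      also have "\<dots> \<le> 1 + h * ((d + 1) * (4 * k + 4))"
        using dp uT unfolding depth_at_most_def by (intro add_left_mono mult_right_mono) auto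
      finally have "real (length (lab v)) \<le> 1 + real h * ((real d + 1) * (4 * real k + 4))"
        by (metis (mono_tags, lifting) of_nat_1 of_nat_add of_nat_le_iff of_nat_mult of_nat_numeral)
      also have "\<dots> \<le> 25 * real d * real h * log 2 (real n)"
        using arith_bound[OF d1 h1 L2 kb] .
      finally show "real (length (lab v)) \<le> 25 * real d * real h * log 2 (real (card V))"
        unfolding n_def .
    next
      fix u v assume u: "u \<in> V" and v: "v \<in> V" and uv: "u \<noteq> v"
      have uT: "\<phi> u \<in> T" using bj u bij_betw_apply leaves_def by fastforce
      have vT: "\<phi> v \<in> T" using bj v bij_betw_apply leaves_def by fastforce
      have "Fdec (inv encL (lab u)) (inv encL (lab v)) = Fdec (S.labu (\<phi> u)) (S.labu (\<phi> v))"
        unfolding lab_def using inj_encL by (simp add: inv_f_f)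
      also have "\<dots> = model_adj A B (\<phi> u) (\<phi> v)" by (rule S.main_correct[OF uT vT])
      also have "\<dots> = E u v" using ad u v uv by blast
      finally show "Fdec (inv encL (lab u)) (inv encL (lab v)) \<longleftrightarrow> E u v" .
    qed
  qed
qed simp


end
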